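(* Let $x,y>0$, $z\ge 0$, $p>0$ (the approximations are intended for the regime $z,p\ll x,y$). Let $a=(x+y)/2$, $g=\sqrt{xy}$, $b=\sqrt{3p(p+2z)}/2$, $d=(z+2p)/3$. Then $$R_J(x,y,z,p)=\frac3g R_C(z,p)-\frac{3\theta}{g-p}\left[R_C(z,g)-\frac pg R_C(z,p)\right],$$ where $1\le\theta\le a/g$ with equalities iff $x=y$; in the complete case $z=0$ this reduces to $$R_J(x,y,0,p)=\frac{3\pi}{2\sqrt{xyp}}\left(1-\frac{\theta\sqrt p}{\sqrt g+\sqrt p}\right)$$ with $\theta$ as before. Moreover, $$R_J(x,y,z,p)=\frac3g R_C(z,p)-\frac{6}{xy}R_G(x,y,0)+\frac{3\pi\theta'}{2xy},\quad \frac{\sqrt b}{1+\sqrt{b/g}}<\theta'<\frac{3a}{2g}\,\frac{\sqrt d}{1+\sqrt{d/g}}.$$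
   Context: For $x,y,z\ge 0$ with at most one zero and $p>0$: $R_J(x,y,z,p)=\frac32\int_0^\infty[(t+x)(t+y)(t+z)]^{-1/2}(t+p)^{-1}\,dt$; $R_G(x,y,z)=\frac14\int_0^\infty[(t+x)(t+y)(t+z)]^{-1/2}\left(\frac{x}{t+x}+\frac{y}{t+y}+\frac{z}{t+z}\right)t\,dt$. For $x\ge0$, $y>0$: $R_C(x,y)=\frac12\int_0^\infty(t+x)^{-1/2}(t+y)^{-1}\,dt$. *)

theory Defs
  imports "HOL-Analysis.Analysis"
begin

text \<open>Carlson symmetric elliptic integrals, as improper integrals over [0,\<infinity>)
  (Henstock-Kurzweil integral over {0..}; the integrands are nonnegative).\<close>

definition R_C :: "real \<Rightarrow> real \<Rightarrow> real" where
  "R_C x y = 1/2 * integral {0..} (\<lambda>t. 1 / (sqrt (t + x) * (t + y)))"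

definition R_J :: "real \<Rightarrow> real \<Rightarrow> real \<Rightarrow> real \<Rightarrow> real" where
  "R_J x y z p = 3/2 * integral {0..}
     (\<lambda>t. 1 / (sqrt ((t + x) * (t + y) * (t + z)) * (t + p)))"

definition R_G :: "real \<Rightarrow> real \<Rightarrow> real \<Rightarrow> real" where
  "R_G x y z = 1/4 * integral {0..}
     (\<lambda>t. (x / (t + x) + y / (t + y) + z / (t + z)) * t / sqrt ((t + x) * (t + y) * (t + z)))"

end

theory Submission
  imports Defs "HOL-Real_Asymp.Real_Asymp"
begin

lemma FTC_Ioi:
  fixes f F :: "real \<Rightarrow> real"
  assumes F: "\<And>x. 0 < x \<Longrightarrow> (F has_real_derivative f x) (at x)"
    and c: "\<And>x. 0 < x \<Longrightarrow> isCont f x"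
    and nn: "\<And>x. 0 < x \<Longrightarrow> 0 \<le> f x"
    and A: "(F \<longlongrightarrow> A) (at_right 0)" and B: "(F \<longlongrightarrow> B) at_top"
  shows "(f has_integral (B - A)) {0<..}"
proof -
  have "set_integrable lborel (einterval 0 \<infinity>) f \<and> (LBINT x=0..\<infinity>. f x) = B - A"
    apply (intro conjI interval_integral_FTC_nonneg[where F=F])
    using F c nn A B by (auto simp: zero_ereal_def ereal_tendsto_simps1)
  then have 1: "set_integrable lborel {0<..} f" "(LINT x:{0<..}|lborel. f x) = B - A"
    by (auto simp: zero_ereal_def interval_integral_to_infinity_eq einterval_def greaterThan_def)
  show ?thesis using set_borel_integral_eq_integral[OF 1(1)] 1(2)
    by (metis has_integral_integrable_integral)
qed

lemma int_dom:
  fixes f g :: "real \<Rightarrow> real"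
  assumes "continuous_on {0<..} f" "g integrable_on {0<..}" "\<And>t. 0 < t \<Longrightarrow> \<bar>f t\<bar> \<le> g t"
  shows "f integrable_on {0<..}"
  apply (rule measurable_bounded_by_integrable_imp_integrable[OF _ assms(2)])
  using assms by (auto intro!: continuous_imp_measurable_on_sets_lebesgue)

lemma int_strict:
  fixes f g :: "real \<Rightarrow> real"
  assumes "f integrable_on {0<..}" "g integrable_on {0<..}"
    "continuous_on {0<..} f" "continuous_on {0<..} g"
    "\<And>t. 0 < t \<Longrightarrow> f t < g t"
  shows "integral {0<..} f < integral {0<..} g"
proof -
  let ?D = "\<lambda>t. g t - f t"
  have sub: "{1..2::real} \<subseteq> {0<..}" by auto
  have cD: "continuous_on {1..2} ?D"
    by (intro continuous_intros continuous_on_subset[OF assms(3) sub] continuous_on_subset[OF assms(4) sub])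
  have "integral (cbox 1 (2::real)) (\<lambda>t. 0::real) < integral (cbox 1 2) ?D"
    by (rule integral_less) (use cD assms(5) in auto)
  also have "\<dots> \<le> integral {0<..} ?D"
  proof (rule integral_subset_le)
    show "?D integrable_on cbox 1 (2::real)" using cD by (simp add: integrable_continuous_interval)
    show "?D integrable_on {0<..}" using assms(1,2) by (rule integrable_diff[rotated])
  qed (use sub assms(5) in \<open>auto intro: less_imp_le\<close>)
  also have "\<dots> = integral {0<..} g - integral {0<..} f"
    using assms by (simp add: integral_diff)
  finally show ?thesis by simp
qed
lemma E1:
  fixes c :: real assumes c: "c > 0"
  shows "((\<lambda>t. 1 / (sqrt t * (t + c))) has_integral pi / sqrt c) {0<..}"
proof -
  define F where "F t = 2 / sqrt c * arctan (sqrt t / sqrt c)" for t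
  have "((\<lambda>t. 1 / (sqrt t * (t + c))) has_integral (pi / sqrt c - 0)) {0<..}"
  proof (rule FTC_Ioi[where F = F])
    fix t :: real assume t: "0 < t"
    have "(F has_real_derivative 2 / sqrt c * (inverse (1 + (sqrt t / sqrt c)\<^sup>2) * (inverse (sqrt t) / 2 / sqrt c))) (at t)"
      unfolding F_def
      apply (rule DERIV_cmult)
      apply (rule DERIV_chain2[OF DERIV_arctan])
      apply (rule DERIV_cdivide)
      by (rule DERIV_real_sqrt[OF t])
    moreover have "2 / sqrt c * (inverse (1 + (sqrt t / sqrt c)\<^sup>2) * (inverse (sqrt t) / 2 / sqrt c)) = 1 / (sqrt t * (t + c))"
    proof -
      have *: "2 / u * (inverse (1 + (v / u)\<^sup>2) * (inverse v / 2 / u)) = 1 / (v * (v\<^sup>2 + u\<^sup>2))"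
        if "u > 0" "v > 0" for u v :: real
      proof -
        have "u\<^sup>2 + v\<^sup>2 > 0" "v\<^sup>2 + u\<^sup>2 > 0" "1 + (v/u)\<^sup>2 > 0" using that by (simp_all add: add_pos_pos add_pos_nonneg)
        then show ?thesis using that by (simp add: divide_simps) (simp add: algebra_simps power2_eq_square)
      qed
      show ?thesis using *[of "sqrt c" "sqrt t"] t c by simp
    qed
    ultimately show "(F has_real_derivative 1 / (sqrt t * (t + c))) (at t)" by simp
    show "isCont (\<lambda>t. 1 / (sqrt t * (t + c))) t"
      using t c by (intro continuous_intros) auto
    show "0 \<le> 1 / (sqrt t * (t + c))" using t c by simp
  next
    show "(F \<longlongrightarrow> 0) (at_right 0)" unfolding F_def using c by real_asymp
    have "(F \<longlongrightarrow> pi / root 2 c) at_top" unfolding F_def using c by real_asymp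
    then show "(F \<longlongrightarrow> pi / sqrt c) at_top" by (simp only: sqrt_def)
  qed
  then show ?thesis by simp
qed

lemma E2eq:
  fixes p :: real assumes p: "p > 0"
  shows "((\<lambda>t. sqrt t / ((t + p) * (t + p))) has_integral pi / (2 * sqrt p)) {0<..}"
proof -
  define F where "F t = arctan (sqrt t / sqrt p) / sqrt p - sqrt t / (t + p)" for t
  have "((\<lambda>t. sqrt t / ((t + p) * (t + p))) has_integral (pi / (2 * sqrt p) - 0)) {0<..}"
  proof (rule FTC_Ioi[where F = F])
    fix t :: real assume t: "0 < t"
    have "(F has_real_derivative inverse (1 + (sqrt t / sqrt p)\<^sup>2) * (inverse (sqrt t) / 2 / sqrt p) / sqrt p
        - ((inverse (sqrt t) / 2) * (t + p) - sqrt t * 1) / ((t + p) * (t + p))) (at t)"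
      unfolding F_def
      apply (rule DERIV_diff)
       apply (rule DERIV_cdivide)
       apply (rule DERIV_chain2[OF DERIV_arctan])
       apply (rule DERIV_cdivide)
       apply (rule DERIV_real_sqrt[OF t])
      apply (rule DERIV_divide)
        apply (rule DERIV_real_sqrt[OF t])
       apply (rule DERIV_add[OF DERIV_ident DERIV_const, simplified])
      using t p by simp
    moreover have "inverse (1 + (sqrt t / sqrt p)\<^sup>2) * (inverse (sqrt t) / 2 / sqrt p) / sqrt p
        - ((inverse (sqrt t) / 2) * (t + p) - sqrt t * 1) / ((t + p) * (t + p)) = sqrt t / ((t + p) * (t + p))"
    proof -
      have *: "inverse (1 + (v / u)\<^sup>2) * (inverse v / 2 / u) / u
        - ((inverse v / 2) * (v\<^sup>2 + u\<^sup>2) - v * 1) / ((v\<^sup>2 + u\<^sup>2) * (v\<^sup>2 + u\<^sup>2)) = v / ((v\<^sup>2 + u\<^sup>2) * (v\<^sup>2 + u\<^sup>2))"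
        if "u > 0" "v > 0" for u v :: real
      proof -
        have "u\<^sup>2 + v\<^sup>2 > 0" "v\<^sup>2 + u\<^sup>2 > 0" "1 + (v/u)\<^sup>2 > 0" using that by (simp_all add: add_pos_pos add_pos_nonneg)
        then show ?thesis using that by (simp add: divide_simps) (simp add: algebra_simps power2_eq_square)
      qed
      show ?thesis using *[of "sqrt p" "sqrt t"] t p by simp
    qed
    ultimately show "(F has_real_derivative sqrt t / ((t + p) * (t + p))) (at t)" by simp
    show "isCont (\<lambda>t. sqrt t / ((t + p) * (t + p))) t"
      using t p by (intro continuous_intros) auto
    show "0 \<le> sqrt t / ((t + p) * (t + p))" using t p by simp
  next
    show "(F \<longlongrightarrow> 0) (at_right 0)" unfolding F_def using p by real_asymp
    have "(F \<longlongrightarrow> pi * inverse (root 2 p) / 2) at_top" unfolding F_def using p by real_asymp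
    then show "(F \<longlongrightarrow> pi / (2 * sqrt p)) at_top" by (simp only: sqrt_def) (simp add: field_simps)
  qed
  then show ?thesis by simp
qed

lemma E2:
  fixes p q :: real assumes p: "p > 0" and q: "q > 0"
  shows "((\<lambda>t. sqrt t / ((t + p) * (t + q))) has_integral pi / (sqrt p + sqrt q)) {0<..}"
proof (cases "p = q")
  case True
  then show ?thesis using E2eq[OF p] by simp
next
  case False
  have i: "((\<lambda>t. q / (q - p) * (1 / (sqrt t * (t + q))) - p / (q - p) * (1 / (sqrt t * (t + p))))
     has_integral (q / (q - p) * (pi / sqrt q) - p / (q - p) * (pi / sqrt p))) {0<..}"
    by (intro has_integral_diff has_integral_mult_right E1 p q)
  have v: "q / (q - p) * (pi / sqrt q) - p / (q - p) * (pi / sqrt p) = pi / (sqrt p + sqrt q)"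
  proof -
    have *: "v\<^sup>2 / (v\<^sup>2 - u\<^sup>2) * (pi / v) - u\<^sup>2 / (v\<^sup>2 - u\<^sup>2) * (pi / u) = pi / (u + v)"
      if "u > 0" "v > 0" "u \<noteq> v" for u v :: real
    proof -
      have "v\<^sup>2 - u\<^sup>2 \<noteq> 0" using that by (auto simp: power2_eq_square algebra_simps)
        (metis abs_of_pos abs_real_def less_irrefl mult_less_cancel_left_pos real_sqrt_abs2 that)
      moreover have "u + v > 0" using that by simp
      ultimately show ?thesis using that by (simp add: divide_simps) (simp add: algebra_simps power2_eq_square)
    qed
    have "sqrt p \<noteq> sqrt q" using False p q by simp
    then show ?thesis using *[of "sqrt p" "sqrt q"] p q by simp
  qed
  show ?thesis
  proof (rule has_integral_eq[OF _ i[unfolded v]])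
    fix t :: real assume "t \<in> {0<..}"
    then have t: "t > 0" by simp
    have *: "q / (q - p) * (1 / (w * (w\<^sup>2 + q))) - p / (q - p) * (1 / (w * (w\<^sup>2 + p))) = w / ((w\<^sup>2 + p) * (w\<^sup>2 + q))"
      if "w > 0" for w
    proof -
      have "q - p \<noteq> 0" "w\<^sup>2 + p > 0" "w\<^sup>2 + q > 0" using that False p q by (auto intro: add_pos_pos)
      then show ?thesis using that by (simp add: divide_simps) (simp add: algebra_simps power2_eq_square)
    qed
    show "q / (q - p) * (1 / (sqrt t * (t + q))) - p / (q - p) * (1 / (sqrt t * (t + p))) = sqrt t / ((t + p) * (t + q))"
      using *[of "sqrt t"] t by simp
  qed
qed

lemma P1:
  fixes x y t :: real assumes x: "x > 0" and y: "y > 0" and t: "t \<ge> 0"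
  shows "t + sqrt (x * y) \<le> sqrt ((t + x) * (t + y))"
    and "x \<noteq> y \<Longrightarrow> t > 0 \<Longrightarrow> t + sqrt (x * y) < sqrt ((t + x) * (t + y))"
proof -
  have g2: "sqrt (x * y) ^ 2 = x * y" using x y by simp
  have am: "2 * sqrt (x * y) \<le> x + y"
    using arith_geo_mean_sqrt[of x y] x y by simp
  have Q: "(t + x) * (t + y) = t^2 + (x + y) * t + sqrt (x * y) ^ 2" using g2 by (simp add: algebra_simps power2_eq_square)
  have "(t + sqrt (x * y))^2 \<le> (t + x) * (t + y)"
    unfolding Q using mult_left_mono[OF am t] by (simp add: power2_eq_square algebra_simps)
  then show "t + sqrt (x * y) \<le> sqrt ((t + x) * (t + y))" by (rule real_le_rsqrt)
  assume xy: "x \<noteq> y" and tp: "t > 0"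
  have "sqrt x \<noteq> sqrt y" using xy x y by simp
  then have "0 < (sqrt x - sqrt y)^2" by simp
  then have am': "2 * sqrt (x * y) < x + y" using x y
    by (simp add: power2_eq_square algebra_simps real_sqrt_mult)
  have "(t + sqrt (x * y))^2 < (t + x) * (t + y)"
    unfolding Q using mult_strict_left_mono[OF am' tp] by (simp add: power2_eq_square algebra_simps)
  then show "t + sqrt (x * y) < sqrt ((t + x) * (t + y))" by (rule real_less_rsqrt)
qed

lemma P3:
  fixes s g a t :: real
  assumes g: "g > 0" and t: "t > 0" and ag: "a \<ge> g" and s: "s \<ge> t + g"
    and s2: "s^2 = t^2 + 2 * a * t + g^2"
  shows "1 / g - 1 / s \<le> a / g * (t / (g * (t + g)))"
    and "a > g \<Longrightarrow> 1 / g - 1 / s < a / g * (t / (g * (t + g)))"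
proof -
  have sp: "s > 0" using s g t by linarith
  have e: "1 / g - 1 / s = t * (t + 2 * a) / (g * s * (s + g))"
  proof -
    have "(s - g) * (s + g) = t * (t + 2 * a)" using s2 by (simp add: algebra_simps power2_eq_square)
    then show ?thesis using sp g by (simp add: divide_simps; simp add: algebra_simps)
  qed
  have m1: "a * (t + g) * (t + 2 * g) \<le> a * s * (s + g)"
  proof -
    have "(t + g) * (t + 2 * g) \<le> s * (s + g)" using s g t by (intro mult_mono) auto
    then show ?thesis using ag g by (simp add: mult.assoc mult_left_mono)
  qed
  have m2: "g * (t + 2 * a) \<le> a * (t + 2 * g)" using ag t g by (simp add: algebra_simps mult_right_mono)
  have m2': "g * (t + 2 * a) * (t + g) \<le> a * (t + 2 * g) * (t + g)" using m2 t g by (simp add: mult_right_mono)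
  have key: "g * (t + 2 * a) * (t + g) \<le> a * s * (s + g)" using m1 m2' by (simp add: algebra_simps)
  have fin: "t * (t + 2 * a) / (g * s * (s + g)) \<le> a / g * (t / (g * (t + g)))
        \<longleftrightarrow> g * (t + 2 * a) * (t + g) * t * g \<le> a * s * (s + g) * t * g"
    using sp g t by (simp add: divide_simps; simp add: algebra_simps)
  show "1 / g - 1 / s \<le> a / g * (t / (g * (t + g)))"
    unfolding e fin using key t g by (simp add: mult_right_mono)
  assume agt: "a > g"
  have m2s: "g * (t + 2 * a) < a * (t + 2 * g)" using agt t g by (simp add: algebra_simps mult_strict_right_mono)
  have "g * (t + 2 * a) * (t + g) < a * (t + 2 * g) * (t + g)" using m2s t g by (simp add: mult_strict_right_mono)
  then have key': "g * (t + 2 * a) * (t + g) < a * s * (s + g)" using m1 by (simp add: algebra_simps)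
  show "1 / g - 1 / s < a / g * (t / (g * (t + g)))"
  proof -
    have fin': "t * (t + 2 * a) / (g * s * (s + g)) < a / g * (t / (g * (t + g)))
        \<longleftrightarrow> g * (t + 2 * a) * (t + g) * t * g < a * s * (s + g) * t * g"
      using sp g t by (simp add: divide_simps; simp add: algebra_simps)
    show ?thesis unfolding e fin' using key' t g by (simp add: mult_strict_right_mono)
  qed
qed

lemma frac_less_cross:
  fixes a b c d :: real
  assumes "0 < b" "0 < d"
  shows "a / b < c / d \<longleftrightarrow> a * d < c * b"
proof -
  have "a / b < c / d \<longleftrightarrow> a < c / d * b" using assms by (simp add: pos_divide_less_eq)
  also have "\<dots> \<longleftrightarrow> a * d < c * b" using assms by (simp add: pos_less_divide_eq mult.commute mult.left_commute)
  finally show ?thesis .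
qed

lemma frac_le_cross:
  fixes a b c d :: real
  assumes "0 < b" "0 < d"
  shows "a / b \<le> c / d \<longleftrightarrow> a * d \<le> c * b"
proof -
  have "a / b \<le> c / d \<longleftrightarrow> a \<le> c / d * b" using assms by (simp add: pos_divide_le_eq)
  also have "\<dots> \<longleftrightarrow> a * d \<le> c * b" using assms by (simp add: pos_le_divide_eq mult.commute mult.left_commute)
  finally show ?thesis .
qed

lemma P4:
  fixes t z p b :: real
  assumes t: "t > 0" and z: "z \<ge> 0" and p: "p > 0" and b: "b = sqrt (3 * p * (p + 2 * z)) / 2"
  shows "t * (1 / (sqrt (t + z) * (t + p))) < sqrt t / (t + b)"
proof -
  have b0: "b \<ge> 0" unfolding b using p z by simp
  have X: "0 \<le> 3 * p * (p + 2 * z)" using p z by simp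
  have b2: "b^2 = 3 * p * (p + 2 * z) / 4" unfolding b using X by (simp add: power_divide)
  have "(2 * b)^2 \<le> (z + 2 * p)^2"
  proof -
    have "(2 * b)^2 = 3 * p * (p + 2 * z)" using b2 by (simp add: power_mult_distrib)
    moreover have "3 * p * (p + 2 * z) \<le> (z + 2 * p)^2"
      using zero_le_power2[of "z - p"] by (simp add: power2_eq_square algebra_simps)
    ultimately show ?thesis by simp
  qed
  then have b2z: "2 * b \<le> z + 2 * p" by (rule power2_le_imp_le) (use z p in auto)
  have poly: "t * (t + b)^2 < (t + z) * (t + p)^2"
  proof -
    have e0: "(t + z) * (t + p)^2 - t * (t + b)^2 = (z + 2 * p - 2 * b) * t^2 + (p^2 + 2 * p * z - b^2) * t + z * p^2"
      by (simp add: power2_eq_square algebra_simps)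
    have "p^2 + 2 * p * z - b^2 = p * (p + 2 * z) / 4" unfolding b2 by (simp add: power2_eq_square algebra_simps)
    then have e: "(t + z) * (t + p)^2 - t * (t + b)^2 = (z + 2 * p - 2 * b) * t^2 + (p * (p + 2 * z) / 4) * t + z * p^2"
      using e0 by simp
    have "0 \<le> (z + 2 * p - 2 * b) * t^2" using b2z by simp
    moreover have "0 < (p * (p + 2 * z) / 4) * t" using p z t by simp
    moreover have "0 \<le> z * p^2" using z by simp
    ultimately show ?thesis using e by linarith
  qed
  have "(sqrt t * (t + b))^2 < (sqrt (t + z) * (t + p))^2"
    using poly t z by (simp add: power_mult_distrib)
  then have l: "sqrt t * (t + b) < sqrt (t + z) * (t + p)"
    by (rule power_less_imp_less_base) (use t z p in simp)
  have "sqrt t * (sqrt t * (t + b)) < sqrt t * (sqrt (t + z) * (t + p))"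
    using mult_strict_left_mono[OF l] t by simp
  then have l2: "t * (t + b) < sqrt t * (sqrt (t + z) * (t + p))"
    using t by (simp add: mult.assoc[symmetric])
  have pos: "sqrt (t + z) * (t + p) > 0" "t + b > 0" using t z p b0 by auto
  have "t / (sqrt (t + z) * (t + p)) < sqrt t / (t + b)"
    using l2 by (subst frac_less_cross[OF pos]) simp
  then show ?thesis by simp
qed

lemma amgm3:
  fixes u v :: real assumes "u \<ge> 0" "v \<ge> 0"
  shows "27 * (v * u^2) \<le> (v + 2 * u)^3"
proof -
  have "(v + 2 * u)^3 - 27 * (v * u^2) = (v - u)^2 * (v + 8 * u)"
    by (simp add: power2_eq_square power3_eq_cube algebra_simps)
  moreover have "(v - u)^2 * (v + 8 * u) \<ge> 0" using assms by simp
  ultimately show ?thesis by linarith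
qed

lemma P5:
  fixes t z p d :: real
  assumes t: "t > 0" and z: "z \<ge> 0" and p: "p > 0" and d: "d = (z + 2 * p) / 3"
  shows "1 / sqrt t - t * (1 / (sqrt (t + z) * (t + p))) < 3 / 2 * (1 / sqrt t - sqrt t / (t + d))"
proof -
  define w where "w = sqrt t"
  define r where "r = sqrt (t + z)"
  have w: "w > 0" "w * w = t" using t unfolding w_def by auto
  have r: "r > 0" "r * r = t + z" using t z unfolding r_def by auto
  have d0: "d > 0" using d p z by simp
  have rhs: "3 / 2 * (1 / w - w / (t + d)) = 3 * d / (2 * w * (t + d))"
    using w d0 t by (simp add: divide_simps; simp add: algebra_simps)
  have lhs: "1 / w - t * (1 / (r * (t + p))) = (r * (t + p) - t * w) / (w * r * (t + p))"
    using w r t p by (simp add: divide_simps; simp add: algebra_simps)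
  have key: "2 * (t + d) * (r * (t + p) - t * w) < 3 * d * r * (t + p)"
  proof (cases "2 * t \<le> d")
    case True
    have "2 * (t + d) * (r * (t + p) - t * w) < 2 * (t + d) * (r * (t + p))"
      using t d0 w by (simp add: mult_pos_pos)
    also have "\<dots> \<le> 3 * d * r * (t + p)"
    proof -
      have "2 * (t + d) \<le> 3 * d" using True by simp
      then show ?thesis using r p t by (simp add: mult.assoc mult_right_mono)
    qed
    finally show ?thesis .
  next
    case False
    then have tg: "2 * t > d" by simp
    have am: "(t + z) * (t + p)^2 \<le> (t + d)^3"
    proof -
      have "(t + z) + 2 * (t + p) = 3 * (t + d)" using d by simp
      then have "27 * ((t + z) * (t + p)^2) \<le> (3 * (t + d))^3"
        using amgm3[of "t + p" "t + z"] t z p by simp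
      moreover have "(3 * (t + d))^3 = 27 * (t + d)^3" by (simp only: power_mult_distrib) simp
      ultimately show ?thesis by linarith
    qed
    have c1: "(2 * t - d)^2 * (t + d) < 4 * t^3"
    proof -
      have "4 * t^3 - (2 * t - d)^2 * (t + d) = d^2 * (3 * t - d)"
        by (simp add: power2_eq_square power3_eq_cube algebra_simps)
      moreover have "d^2 * (3 * t - d) > 0" using d0 tg by simp
      ultimately show ?thesis by linarith
    qed
    have r2: "r^2 = t + z" using r by (simp add: power2_eq_square)
    have w2: "w^2 = t" using w by (simp add: power2_eq_square)
    have "((2 * t - d) * r * (t + p))^2 = (2 * t - d)^2 * (r^2 * (t + p)^2)"
      by (simp add: power_mult_distrib)
    also have "\<dots> = (2 * t - d)^2 * ((t + z) * (t + p)^2)" unfolding r2 ..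
    also have "\<dots> \<le> (2 * t - d)^2 * (t + d)^3"
      using am by (simp add: mult_left_mono)
    also have "\<dots> = ((2 * t - d)^2 * (t + d)) * (t + d)^2"
      by (simp add: power2_eq_square power3_eq_cube algebra_simps)
    also have "\<dots> < 4 * t^3 * (t + d)^2"
      using c1 d0 t by (simp add: mult_strict_right_mono)
    also have "\<dots> = 4 * t^2 * w^2 * (t + d)^2"
      unfolding w2 by (simp add: power2_eq_square power3_eq_cube)
    also have "\<dots> = (2 * t * w * (t + d))^2"
      by (simp add: power_mult_distrib)
    finally have "((2 * t - d) * r * (t + p))^2 < (2 * t * w * (t + d))^2" .
    then have "(2 * t - d) * r * (t + p) < 2 * t * w * (t + d)"
      by (rule power_less_imp_less_base) (use t w d0 in simp)
    then show ?thesis by (simp add: algebra_simps)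
  qed
  have pos: "w * r * (t + p) > 0" "2 * w * (t + d) > 0" using w r t p d0 by auto
  have "(r * (t + p) - t * w) / (w * r * (t + p)) < 3 * d / (2 * w * (t + d))"
    apply (subst frac_less_cross[OF pos])
    using mult_strict_left_mono[OF key, of w] w(1) by (simp add: algebra_simps)
  then have "1 / w - t * (1 / (r * (t + p))) < 3 / 2 * (1 / w - w / (t + d))"
    unfolding lhs rhs .
  then show ?thesis unfolding w_def r_def .
qed

lemma alg_RG:
  fixes w s G x y :: real
  assumes w: "w > 0" and s: "s > 0" and G: "G > 0" and x: "x > 0" and y: "y > 0"
  shows "2 * x * y * ((0 - (- (2 * w^2 + x + y) / (2 * s * ((w^2 + x) * (w^2 + y))))) * (1 / w) + (- 1 / (2 * w^2 * w)) * (1 / G - 1 / s))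
       - 2 * (x + y) * ((1 / (2 * w)) * (1 / s) + (- (2 * w^2 + x + y) / (2 * s * ((w^2 + x) * (w^2 + y)))) * w)
     = (x / (w^2 + x) + y / (w^2 + y)) * w / s - x * y * ((1 / G - 1 / s) / (w^2 * w))"
proof -
  have "w^2 + x > 0" "w^2 + y > 0" using x y by (auto intro: add_nonneg_pos)
  then show ?thesis using w s G by (simp add: divide_simps; simp add: algebra_simps power2_eq_square)
qed

lemma d_sqrt: "0 < t \<Longrightarrow> DERIV sqrt t :> 1 / (2 * sqrt t)"
proof -
  assume t: "0 < t"
  have "inverse (sqrt t) / 2 = 1 / (2 * sqrt t)" by (simp add: inverse_eq_divide)
  then show ?thesis using DERIV_real_sqrt[OF t] by (simp add: mult_ac)
qed

lemma d_invsqrt: "0 < t \<Longrightarrow> DERIV (\<lambda>t. 1 / sqrt t) t :> - 1 / (2 * t * sqrt t)"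
proof -
  assume t: "0 < t"
  have "DERIV (\<lambda>t. 1 / sqrt t) t :> (0 * sqrt t - 1 * (1 / (2 * sqrt t))) / (sqrt t * sqrt t)"
    by (rule DERIV_divide[OF DERIV_const d_sqrt[OF t]]) (use t in simp)
  then show ?thesis using t by (simp add: divide_simps mult_ac)
qed

lemma d_invsqrtQ:
  fixes x y t :: real assumes "x > 0" "y > 0" "t > 0"
  shows "DERIV (\<lambda>t. 1 / sqrt ((t + x) * (t + y))) t :> - (2 * t + x + y) / (2 * sqrt ((t + x) * (t + y)) * ((t + x) * (t + y)))"
proof -
  have Q: "(t + x) * (t + y) > 0" using assms by simp
  have dQ: "DERIV (\<lambda>t. (t + x) * (t + y)) t :> 2 * t + x + y"
  proof -
    have "DERIV (\<lambda>t. (t + x) * (t + y)) t :> (1 + 0) * (t + y) + (1 + 0) * (t + x)"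
      by (rule DERIV_mult[OF DERIV_add[OF DERIV_ident DERIV_const] DERIV_add[OF DERIV_ident DERIV_const]])
    then show ?thesis by (simp add: algebra_simps)
  qed
  have ds: "DERIV (\<lambda>t. sqrt ((t + x) * (t + y))) t :> inverse (sqrt ((t + x) * (t + y))) / 2 * (2 * t + x + y)"
    by (rule DERIV_chain2[OF DERIV_real_sqrt[OF Q] dQ])
  have "DERIV (\<lambda>t. 1 / sqrt ((t + x) * (t + y))) t :> (0 * sqrt ((t + x) * (t + y)) - 1 * (inverse (sqrt ((t + x) * (t + y))) / 2 * (2 * t + x + y))) / (sqrt ((t + x) * (t + y)) * sqrt ((t + x) * (t + y)))"
    by (rule DERIV_divide[OF DERIV_const ds]) (use Q assms in simp)
  moreover have "t + x > 0" "t + y > 0" using assms by auto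
  ultimately show ?thesis using Q by (simp add: divide_simps mult_ac)
qed

lemma d_RG:
  fixes x y G t :: real assumes x: "x > 0" and y: "y > 0" and t: "t > 0" and G: "G > 0"
  shows "DERIV (\<lambda>t. 2 * x * y * ((1 / G - 1 / sqrt ((t + x) * (t + y))) * (1 / sqrt t)) - 2 * (x + y) * (sqrt t * (1 / sqrt ((t + x) * (t + y))))) t
     :> (x / (t + x) + y / (t + y)) * sqrt t / sqrt ((t + x) * (t + y)) - x * y * ((1 / G - 1 / sqrt ((t + x) * (t + y))) / (t * sqrt t))"
proof -
  have Q: "(t + x) * (t + y) > 0" using x y t by simp
  have d: "DERIV (\<lambda>t. 2 * x * y * ((1 / G - 1 / sqrt ((t + x) * (t + y))) * (1 / sqrt t)) - 2 * (x + y) * (sqrt t * (1 / sqrt ((t + x) * (t + y))))) t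
     :> 2 * x * y * ((0 - (- (2 * t + x + y) / (2 * sqrt ((t + x) * (t + y)) * ((t + x) * (t + y))))) * (1 / sqrt t) + (- 1 / (2 * t * sqrt t)) * (1 / G - 1 / sqrt ((t + x) * (t + y))))
       - 2 * (x + y) * ((1 / (2 * sqrt t)) * (1 / sqrt ((t + x) * (t + y))) + (- (2 * t + x + y) / (2 * sqrt ((t + x) * (t + y)) * ((t + x) * (t + y)))) * sqrt t)"
    apply (rule DERIV_diff)
     apply (rule DERIV_cmult)
     apply (rule DERIV_mult)
      apply (rule DERIV_diff[OF DERIV_const d_invsqrtQ[OF x y t]])
     apply (rule d_invsqrt[OF t])
    apply (rule DERIV_cmult)
    apply (rule DERIV_mult)
     apply (rule d_sqrt[OF t])
    by (rule d_invsqrtQ[OF x y t])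
  have a: "(sqrt t)^2 = t" using t by simp
  have sp: "sqrt t > 0" "sqrt ((t + x) * (t + y)) > 0" using t Q by auto
  note e = alg_RG[OF sp(1) sp(2) G x y, unfolded a]
  show ?thesis using d unfolding e .
qed

lemma dE1:
  fixes c t :: real assumes c: "c > 0" and t: "t > 0"
  shows "DERIV (\<lambda>t. 2 / sqrt c * arctan (sqrt t / sqrt c)) t :> 1 / (sqrt t * (t + c))"
proof -
  have "DERIV (\<lambda>t. 2 / sqrt c * arctan (sqrt t / sqrt c)) t :> 2 / sqrt c * (inverse (1 + (sqrt t / sqrt c)\<^sup>2) * (inverse (sqrt t) / 2 / sqrt c))"
    apply (rule DERIV_cmult)
    apply (rule DERIV_chain2[OF DERIV_arctan])
    apply (rule DERIV_cdivide)
    by (rule DERIV_real_sqrt[OF t])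
  moreover have "2 / sqrt c * (inverse (1 + (sqrt t / sqrt c)\<^sup>2) * (inverse (sqrt t) / 2 / sqrt c)) = 1 / (sqrt t * (t + c))"
  proof -
    have *: "2 / u * (inverse (1 + (v / u)\<^sup>2) * (inverse v / 2 / u)) = 1 / (v * (v\<^sup>2 + u\<^sup>2))"
      if "u > 0" "v > 0" for u v :: real
    proof -
      have "u\<^sup>2 + v\<^sup>2 > 0" "v\<^sup>2 + u\<^sup>2 > 0" "1 + (v/u)\<^sup>2 > 0" using that by (simp_all add: add_pos_pos add_pos_nonneg)
      then show ?thesis using that by (simp add: divide_simps; simp add: algebra_simps power2_eq_square)
    qed
    show ?thesis using *[of "sqrt c" "sqrt t"] t c by simp
  qed
  ultimately show ?thesis by simp
qed

lemma limE1_0: "c > 0 \<Longrightarrow> ((\<lambda>t. 2 / sqrt c * arctan (sqrt t / sqrt c)) \<longlongrightarrow> 0) (at_right 0)"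
  by real_asymp

lemma limE1_top: "c > 0 \<Longrightarrow> ((\<lambda>t. 2 / sqrt c * arctan (sqrt t / sqrt c)) \<longlongrightarrow> pi / sqrt c) at_top"
proof -
  assume c: "c > 0"
  have "((\<lambda>t. 2 / sqrt c * arctan (sqrt t / sqrt c)) \<longlongrightarrow> pi / root 2 c) at_top" using c by real_asymp
  then show ?thesis by (simp only: sqrt_def)
qed

lemma int_Ici: "integral {0..} f = integral {0<..} (f :: real \<Rightarrow> real)"
proof (rule integral_spike_set)
  show "negligible {x \<in> {0..} - {0<..}. f x \<noteq> 0}"
    by (rule negligible_subset[of "{0}"]) auto
  show "negligible {x \<in> {0<..} - {0..}. f x \<noteq> 0}"
    by (rule negligible_subset[of "{}"]) auto
qed

lemma hh_cont: "z \<ge> 0 \<Longrightarrow> p > 0 \<Longrightarrow> continuous_on {0<..} (\<lambda>t::real. 1 / (sqrt (t + z) * (t + p)))"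
  by (intro continuous_intros) (auto simp: add_pos_nonneg)

lemma RC_has:
  fixes z p :: real assumes z: "z \<ge> 0" and p: "p > 0"
  shows "((\<lambda>t. 1 / (sqrt (t + z) * (t + p))) has_integral 2 * R_C z p) {0<..}"
proof -
  have "(\<lambda>t. 1 / (sqrt (t + z) * (t + p))) integrable_on {0<..}"
  proof (rule int_dom[OF hh_cont[OF z p]])
    show "(\<lambda>t. 1 / (sqrt t * (t + p))) integrable_on {0<..}" using E1[OF p] by blast
    fix t :: real assume t: "0 < t"
    have "sqrt t * (t + p) \<le> sqrt (t + z) * (t + p)"
      using t z p by (intro mult_right_mono) auto
    then show "\<bar>1 / (sqrt (t + z) * (t + p))\<bar> \<le> 1 / (sqrt t * (t + p))"
      using t z p by (simp add: frac_le_cross[symmetric] divide_simps add_pos_nonneg)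
  qed
  then have "((\<lambda>t. 1 / (sqrt (t + z) * (t + p))) has_integral integral {0<..} (\<lambda>t. 1 / (sqrt (t + z) * (t + p)))) {0<..}"
    by (rule integrable_integral)
  moreover have "integral {0<..} (\<lambda>t. 1 / (sqrt (t + z) * (t + p))) = 2 * R_C z p"
    unfolding R_C_def int_Ici by simp
  ultimately show ?thesis by simp
qed

lemma kk_bounds:
  fixes x y t :: real
  assumes x: "x > 0" and y: "y > 0" and t: "t > 0"
  defines "g \<equiv> sqrt (x * y)" and "a \<equiv> (x + y) / 2"
  shows "t / (g * (t + g)) \<le> 1 / g - 1 / sqrt ((t + x) * (t + y))"
    and "1 / g - 1 / sqrt ((t + x) * (t + y)) \<le> a / g * (t / (g * (t + g)))"
    and "x \<noteq> y \<Longrightarrow> t / (g * (t + g)) < 1 / g - 1 / sqrt ((t + x) * (t + y))"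
    and "x \<noteq> y \<Longrightarrow> 1 / g - 1 / sqrt ((t + x) * (t + y)) < a / g * (t / (g * (t + g)))"
    and "0 \<le> t / (g * (t + g))" and "1 / g - 1 / sqrt ((t + x) * (t + y)) \<le> 1 / g"
    and "t / (g * (t + g)) \<le> 1 / g"
proof -
  have g: "g > 0" unfolding g_def using x y by simp
  have e0: "1 / g - 1 / (t + g) = t / (g * (t + g))" using g t by (simp add: divide_simps)
  have s1: "t + g \<le> sqrt ((t + x) * (t + y))" unfolding g_def using P1(1)[OF x y] t by simp
  have Q: "sqrt ((t + x) * (t + y)) > 0" using x y t by simp
  show "t / (g * (t + g)) \<le> 1 / g - 1 / sqrt ((t + x) * (t + y))"
    unfolding e0[symmetric] using divide_left_mono[OF s1, of 1] g t Q by simp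
  {
    assume xy: "x \<noteq> y"
    have s1': "t + g < sqrt ((t + x) * (t + y))" unfolding g_def using P1(2)[OF x y _ xy t] t by simp
    show "t / (g * (t + g)) < 1 / g - 1 / sqrt ((t + x) * (t + y))"
      unfolding e0[symmetric] using divide_strict_left_mono[OF s1', of 1] g t Q by simp
  }
  have ag: "a \<ge> g" unfolding a_def g_def using arith_geo_mean_sqrt[of x y] x y by simp
  have s2: "(sqrt ((t + x) * (t + y)))^2 = t^2 + 2 * a * t + g^2"
    unfolding a_def g_def using x y t by (simp add: power2_eq_square algebra_simps)
  show "1 / g - 1 / sqrt ((t + x) * (t + y)) \<le> a / g * (t / (g * (t + g)))"
    by (rule P3(1)[OF g t ag s1 s2])
  {
    assume xy: "x \<noteq> y"
    have "sqrt x \<noteq> sqrt y" using xy x y by simp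
    then have "0 < (sqrt x - sqrt y)^2" by simp
    then have "2 * sqrt (x * y) < x + y" using x y
      by (simp add: power2_eq_square algebra_simps real_sqrt_mult)
    then have agt: "a > g" unfolding a_def g_def by simp
    show "1 / g - 1 / sqrt ((t + x) * (t + y)) < a / g * (t / (g * (t + g)))"
      by (rule P3(2)[OF g t ag s1 s2 agt])
  }
  show "0 \<le> t / (g * (t + g))" using g t by simp
  show "1 / g - 1 / sqrt ((t + x) * (t + y)) \<le> 1 / g" using Q by simp
  show "t / (g * (t + g)) \<le> 1 / g" unfolding e0[symmetric] using g t by simp
qed

lemma H_a: "t > 0 \<Longrightarrow> g > 0 \<Longrightarrow> t / (g * (t + g)) / (t * sqrt t) = 1 / g * (1 / (sqrt t * (t + g)))"
  for t g :: real by (simp add: divide_simps)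

lemma H_b: "t > 0 \<Longrightarrow> g > 0 \<Longrightarrow> 1 / g * (1 / (sqrt t * (t + g))) - H * (t / (g * (t + g))) = 1 / (g * (t + g)) * (1 / sqrt t - t * H)"
  for t g H :: real by (simp add: divide_simps; simp add: algebra_simps)

lemma H_c: "t > 0 \<Longrightarrow> g > 0 \<Longrightarrow> b \<ge> 0 \<Longrightarrow> 1 / g * (1 / (sqrt t * (t + g)) - sqrt t / ((t + b) * (t + g))) = 1 / (g * (t + g)) * (1 / sqrt t - sqrt t / (t + b))"
  for t g b :: real
proof -
  assume "t > 0" "g > 0" "b \<ge> 0"
  then have "t + b > 0" "t + g > 0" by auto
  then show ?thesis using \<open>t > 0\<close> \<open>g > 0\<close> by (simp add: divide_simps; simp add: algebra_simps)
qed

lemma H_d: "t > 0 \<Longrightarrow> g > 0 \<Longrightarrow> d \<ge> 0 \<Longrightarrow> 3 / (2 * g) * (1 / (sqrt t * (t + g)) - sqrt t / ((t + d) * (t + g))) = 1 / (g * (t + g)) * (3 / 2 * (1 / sqrt t - sqrt t / (t + d)))"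
  for t g d :: real
proof -
  assume "t > 0" "g > 0" "d \<ge> 0"
  then have "t + d > 0" "t + g > 0" by auto
  then show ?thesis using \<open>t > 0\<close> \<open>g > 0\<close> by (simp add: divide_simps; simp add: algebra_simps)
qed

lemma H_lim:
  fixes s w g t x y :: real
  assumes "s > 0" "w > 0" "g > 0" "s * s = t * t + (x + y) * t + g * g" "w * w = t"
  shows "(1 / g - 1 / s) * (1 / w) = w * (t + x + y) / (g * s * (s + g))"
proof -
  have "(s - g) * (s + g) = t * (t + x + y)" using assms(4) by (simp add: algebra_simps)
  moreover have "s + g > 0" using assms by simp
  ultimately show ?thesis using assms(1-3,5)
    by (simp add: divide_simps; simp add: algebra_simps; metis mult.assoc mult.commute)
qed

lemma int_cong0:
  fixes f h :: "real \<Rightarrow> real"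
  assumes "\<And>t. t > 0 \<Longrightarrow> f t = h t"
  shows "integral {0<..} f = integral {0<..} h"
  by (rule Henstock_Kurzweil_Integration.integral_cong) (use assms in auto)

lemma has_int_cong0:
  fixes f h :: "real \<Rightarrow> real"
  assumes "(f has_integral v) {0<..}" "\<And>t. t > 0 \<Longrightarrow> f t = h t"
  shows "(h has_integral v) {0<..}"
  by (rule has_integral_eq[OF _ assms(1)]) (use assms(2) in auto)


lemma fin_lo:
  fixes g b :: real assumes g: "g > 0" and b: "b > 0"
  shows "(g * g) / pi * (1 / g * (pi / sqrt g - pi / (sqrt b + sqrt g))) = sqrt b / (1 + sqrt (b / g))"
proof -
  have *: "((u * u) * (u * u)) / pi * (1 / (u * u) * (pi / u - pi / (v + u))) = v / (1 + v / u)" if "u > 0" "v > 0" for u v :: real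
  proof -
    have "v + u > 0" "u + v > 0" "pi > 0" using that pi_gt_zero by auto
    then show ?thesis using that by (simp add: divide_simps; simp add: algebra_simps power2_eq_square)
  qed
  show ?thesis using *[of "sqrt g" "sqrt b"] g b by (simp add: real_sqrt_divide)
qed

lemma fin_hi:
  fixes g d a :: real assumes g: "g > 0" and d: "d > 0"
  shows "(g * g) / pi * (a / g * (3 / (2 * g) * (pi / sqrt g - pi / (sqrt d + sqrt g)))) = 3 * a / (2 * g) * (sqrt d / (1 + sqrt (d / g)))"
proof -
  have *: "((u * u) * (u * u)) / pi * (a / (u * u) * (3 / (2 * (u * u)) * (pi / u - pi / (v + u)))) = 3 * a / (2 * (u * u)) * (v / (1 + v / u))" if "u > 0" "v > 0" for u v :: real
  proof -
    have "v + u > 0" "u + v > 0" "pi > 0" using that pi_gt_zero by auto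
    then show ?thesis using that by (simp add: divide_simps; simp add: algebra_simps power2_eq_square)
  qed
  show ?thesis using *[of "sqrt g" "sqrt d"] g d by (simp add: real_sqrt_divide)
qed


lemma part1:
  fixes x y z p :: real
  assumes hx: "x > 0" and hy: "y > 0" and hz: "z \<ge> 0" and hp: "p > 0"
  defines "g \<equiv> sqrt (x * y)" and "a \<equiv> (x + y) / 2"
  shows "\<exists>\<theta>. 1 \<le> \<theta> \<and> \<theta> \<le> a / g
            \<and> (\<theta> = 1 \<longleftrightarrow> x = y) \<and> (\<theta> = a / g \<longleftrightarrow> x = y)
            \<and> (g \<noteq> p \<longrightarrow>
                 R_J x y z p = 3 / g * R_C z p
                   - 3 * \<theta> / (g - p) * (R_C z g - p / g * R_C z p))
            \<and> (z = 0 \<longrightarrow>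
                 R_J x y 0 p = 3 * pi / (2 * sqrt (x * y * p))
                   * (1 - \<theta> * sqrt p / (sqrt g + sqrt p)))"
proof -
  have g: "g > 0" unfolding g_def using hx hy by simp
  define hh where "hh = (\<lambda>t::real. 1 / (sqrt (t + z) * (t + p)))"
  define kk where "kk = (\<lambda>t::real. 1 / g - 1 / sqrt ((t + x) * (t + y)))"
  define k0 where "k0 = (\<lambda>t::real. t / (g * (t + g)))"
  note kb = kk_bounds[OF hx hy, folded g_def a_def, folded kk_def k0_def]
  have kb1: "k0 t \<le> kk t" "kk t \<le> a / g * k0 t" "0 \<le> k0 t" "kk t \<le> 1 / g" "k0 t \<le> 1 / g"
    if "t > 0" for t using kb[OF that] unfolding kk_def k0_def by auto
  have kb2: "k0 t < kk t" "kk t < a / g * k0 t" if "t > 0" "x \<noteq> y" for t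
    using kb[OF that(1)] that(2) unfolding kk_def k0_def by auto
  have hpos: "hh t > 0" if "t > 0" for t unfolding hh_def using that hz hp by (simp add: add_pos_nonneg)
  have c_hh: "continuous_on {0<..} hh" unfolding hh_def by (rule hh_cont[OF hz hp])
  have c_kk: "continuous_on {0<..} kk" unfolding kk_def using hx hy
    by (intro continuous_intros) (auto simp: add_pos_pos)
  have c_k0: "continuous_on {0<..} k0" unfolding k0_def using g
    by (intro continuous_intros) (auto simp: add_pos_pos)
  have H1: "(hh has_integral 2 * R_C z p) {0<..}" unfolding hh_def by (rule RC_has[OF hz hp])
  have H1g: "((\<lambda>t. 1 / (sqrt (t + z) * (t + g))) has_integral 2 * R_C z g) {0<..}" by (rule RC_has[OF hz g])
  have H1s: "((\<lambda>t. 1 / g * hh t) has_integral 1 / g * (2 * R_C z p)) {0<..}"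
    by (rule has_integral_mult_right[OF H1])
  have int_hk0: "(\<lambda>t. hh t * k0 t) integrable_on {0<..}"
  proof (rule int_dom)
    show "continuous_on {0<..} (\<lambda>t. hh t * k0 t)" using c_hh c_k0 by (intro continuous_intros)
    show "(\<lambda>t. 1 / g * hh t) integrable_on {0<..}" using H1s by blast
    fix t :: real assume t: "0 < t"
    have "hh t * k0 t \<le> hh t * (1 / g)" using kb1(5)[OF t] hpos[OF t] by (intro mult_left_mono) auto
    moreover have "0 \<le> hh t * k0 t" using kb1(3)[OF t] hpos[OF t] by simp
    ultimately show "\<bar>hh t * k0 t\<bar> \<le> 1 / g * hh t" by simp
  qed
  have sQ: "sqrt ((t + x) * (t + y)) \<ge> g" if "t > 0" for t
    using P1(1)[OF hx hy less_imp_le[OF that]] that unfolding g_def by linarith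
  have int_hQ: "(\<lambda>t. hh t / sqrt ((t + x) * (t + y))) integrable_on {0<..}"
  proof (rule int_dom)
    show "continuous_on {0<..} (\<lambda>t. hh t / sqrt ((t + x) * (t + y)))" using c_hh hx hy
      by (intro continuous_intros) auto
    show "(\<lambda>t. 1 / g * hh t) integrable_on {0<..}" using H1s by blast
    fix t :: real assume t: "0 < t"
    have "hh t / sqrt ((t + x) * (t + y)) \<le> hh t / g"
      using sQ[OF t] hpos[OF t] g by (intro divide_left_mono) (auto intro: mult_pos_pos less_le_trans)
    then show "\<bar>hh t / sqrt ((t + x) * (t + y))\<bar> \<le> 1 / g * hh t"
      using hpos[OF t] hx hy t by simp
  qed
  define J where "J = integral {0<..} (\<lambda>t. hh t / sqrt ((t + x) * (t + y)))"
  have HJ: "((\<lambda>t. hh t / sqrt ((t + x) * (t + y))) has_integral J) {0<..}"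
    unfolding J_def using int_hQ by (rule integrable_integral)
  have RJ: "R_J x y z p = 3 / 2 * J"
  proof -
    have "integral {0<..} (\<lambda>t. 1 / (sqrt ((t + x) * (t + y) * (t + z)) * (t + p))) = J"
      unfolding J_def
    proof (rule int_cong0)
      fix t :: real assume t: "t > 0"
      show "1 / (sqrt ((t + x) * (t + y) * (t + z)) * (t + p)) = hh t / sqrt ((t + x) * (t + y))"
        unfolding hh_def by (simp add: real_sqrt_mult)
    qed
    then show ?thesis unfolding R_J_def int_Ici by simp
  qed
  define I where "I = 1 / g * (2 * R_C z p) - J"
  have HI: "((\<lambda>t. hh t * kk t) has_integral I) {0<..}"
    unfolding I_def
  proof (rule has_int_cong0[OF has_integral_diff[OF H1s HJ]])
    fix t :: real assume "t > 0"
    show "1 / g * hh t - hh t / sqrt ((t + x) * (t + y)) = hh t * kk t"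
      unfolding kk_def by (simp add: algebra_simps)
  qed
  define I0 where "I0 = integral {0<..} (\<lambda>t. hh t * k0 t)"
  have HI0: "((\<lambda>t. hh t * k0 t) has_integral I0) {0<..}"
    unfolding I0_def using int_hk0 by (rule integrable_integral)
  have I0pos: "I0 > 0"
  proof -
    have "integral {0<..} (\<lambda>t::real. 0::real) < integral {0<..} (\<lambda>t. hh t * k0 t)"
    proof (rule int_strict)
      show "(\<lambda>t::real. 0::real) integrable_on {0<..}" by (rule integrable_0)
      show "continuous_on {0<..} (\<lambda>t. hh t * k0 t)" using c_hh c_k0 by (intro continuous_intros)
      fix t :: real assume t: "0 < t"
      have "k0 t > 0" unfolding k0_def using t g by simp
      then show "0 < hh t * k0 t" using hpos[OF t] by simp
    qed (use int_hk0 in auto)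
    then show ?thesis unfolding I0_def by simp
  qed
  have I_ge: "I0 \<le> I"
    by (rule has_integral_le[OF HI0 HI]) (use kb1 hpos in \<open>auto intro: mult_left_mono less_imp_le\<close>)
  have HaI0: "((\<lambda>t. a / g * (hh t * k0 t)) has_integral a / g * I0) {0<..}"
    by (rule has_integral_mult_right[OF HI0])
  have I_le: "I \<le> a / g * I0"
  proof (rule has_integral_le[OF HI HaI0])
    fix t :: real assume "t \<in> {0<..}"
    then have t: "t > 0" by simp
    have "hh t * kk t \<le> hh t * (a / g * k0 t)" using mult_left_mono[OF kb1(2)[OF t] less_imp_le[OF hpos[OF t]]] .
    then show "hh t * kk t \<le> a / g * (hh t * k0 t)" by (simp add: algebra_simps)
  qed
  define \<theta> where "\<theta> = I / I0"
  have RJ2: "R_J x y z p = 3 / 2 * (1 / g * (2 * R_C z p) - \<theta> * I0)"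
  proof -
    have "I = \<theta> * I0" unfolding \<theta>_def using I0pos by simp
    moreover have "J = 1 / g * (2 * R_C z p) - I" unfolding I_def by simp
    ultimately show ?thesis unfolding RJ by simp
  qed
  have th1: "1 \<le> \<theta>" unfolding \<theta>_def using I_ge I0pos by simp
  have th2: "\<theta> \<le> a / g" unfolding \<theta>_def using I_le I0pos by (simp add: divide_simps)
  have strict: "1 < \<theta> \<and> \<theta> < a / g" if xy: "x \<noteq> y"
  proof -
    have c_hk: "continuous_on {0<..} (\<lambda>t. hh t * kk t)" using c_hh c_kk by (intro continuous_intros)
    have "integral {0<..} (\<lambda>t. hh t * k0 t) < integral {0<..} (\<lambda>t. hh t * kk t)"
      by (rule int_strict) (use int_hk0 HI c_hh c_k0 c_kk kb2[OF _ xy] hpos in \<open>auto intro!: continuous_intros\<close>)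
    then have "I0 < I" unfolding integral_unique[OF HI] integral_unique[OF HI0] .
    moreover have "integral {0<..} (\<lambda>t. hh t * kk t) < integral {0<..} (\<lambda>t. a / g * (hh t * k0 t))"
    proof (rule int_strict)
      show "(\<lambda>t. hh t * kk t) integrable_on {0<..}" using HI by blast
      show "(\<lambda>t. a / g * (hh t * k0 t)) integrable_on {0<..}" using HaI0 by blast
      show "continuous_on {0<..} (\<lambda>t. hh t * kk t)" by (rule c_hk)
      show "continuous_on {0<..} (\<lambda>t. a / g * (hh t * k0 t))" using c_hh c_k0 by (intro continuous_intros)
      fix t :: real assume t: "0 < t"
      have "hh t * kk t < hh t * (a / g * k0 t)" using mult_strict_left_mono[OF kb2(2)[OF t xy] hpos[OF t]] .
      then show "hh t * kk t < a / g * (hh t * k0 t)" by (simp add: algebra_simps)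
    qed
    then have "I < a / g * I0" unfolding integral_unique[OF HI] integral_unique[OF HaI0] .
    ultimately show ?thesis unfolding \<theta>_def using I0pos by (simp add: divide_simps)
  qed
  have eqcase: "\<theta> = 1 \<and> a / g = 1" if xy: "x = y"
  proof -
    have gx: "g = x" unfolding g_def using xy hx by simp
    have "kk t = k0 t" if "t > 0" for t
      unfolding kk_def k0_def gx using xy hx that by (simp add: divide_simps)
    then have "(\<lambda>t. hh t * kk t) = (\<lambda>t. hh t * k0 t) \<or> True" by simp
    have "I = I0"
    proof -
      have "((\<lambda>t. hh t * k0 t) has_integral I) {0<..}"
        by (rule has_int_cong0[OF HI]) (use \<open>\<And>t. t > 0 \<Longrightarrow> kk t = k0 t\<close> in simp)
      then show ?thesis using HI0 by (rule has_integral_unique)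
    qed
    then show ?thesis unfolding \<theta>_def a_def gx using I0pos xy hx by simp
  qed
  have A: "(\<theta> = 1 \<longleftrightarrow> x = y) \<and> (\<theta> = a / g \<longleftrightarrow> x = y)"
    using strict eqcase by force
  have B: "R_J x y z p = 3 / g * R_C z p - 3 * \<theta> / (g - p) * (R_C z g - p / g * R_C z p)" if gp: "g \<noteq> p"
  proof -
    have "((\<lambda>t. 1 / (g - p) * (1 / (sqrt (t + z) * (t + g)) - p / g * hh t)) has_integral
        1 / (g - p) * (2 * R_C z g - p / g * (2 * R_C z p))) {0<..}"
      by (intro has_integral_mult_right has_integral_diff H1g H1)
    then have "((\<lambda>t. hh t * k0 t) has_integral 1 / (g - p) * (2 * R_C z g - p / g * (2 * R_C z p))) {0<..}"
    proof (rule has_int_cong0)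
      fix t :: real assume t: "t > 0"
      have r: "sqrt (t + z) > 0" using t hz by (simp add: add_pos_nonneg)
      have *: "1 / (g - p) * (1 / (r * (t + g)) - p / g * (1 / (r * (t + p)))) = 1 / (r * (t + p)) * (t / (g * (t + g)))"
        if "r > 0" for r
      proof -
        have "g - p \<noteq> 0" "t + g > 0" "t + p > 0" using gp g t hp by auto
        then show ?thesis using that g by (simp add: divide_simps; simp add: algebra_simps)
      qed
      show "1 / (g - p) * (1 / (sqrt (t + z) * (t + g)) - p / g * hh t) = hh t * k0 t"
        unfolding hh_def k0_def using *[OF r] .
    qed
    then have "I0 = 1 / (g - p) * (2 * R_C z g - p / g * (2 * R_C z p))"
      using HI0 by (rule has_integral_unique[symmetric])
    then have "R_J x y z p = 3 / 2 * (1 / g * (2 * R_C z p) - \<theta> * (1 / (g - p) * (2 * R_C z g - p / g * (2 * R_C z p))))"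
      unfolding RJ2 by simp
    then show ?thesis by (simp add: algebra_simps)
  qed
  have C: "R_J x y 0 p = 3 * pi / (2 * sqrt (x * y * p)) * (1 - \<theta> * sqrt p / (sqrt g + sqrt p))" if z0: "z = 0"
  proof -
    have "((\<lambda>t. 1 / g * (sqrt t / ((t + p) * (t + g)))) has_integral 1 / g * (pi / (sqrt p + sqrt g))) {0<..}"
      by (intro has_integral_mult_right E2 hp g)
    then have "((\<lambda>t. hh t * k0 t) has_integral 1 / g * (pi / (sqrt p + sqrt g))) {0<..}"
    proof (rule has_int_cong0)
      fix t :: real assume t: "t > 0"
      have *: "1 / g * (w / ((w^2 + p) * (w^2 + g))) = 1 / (w * (w^2 + p)) * (w^2 / (g * (w^2 + g)))" if "w > 0" for w
      proof -
        have "w^2 + g > 0" "w^2 + p > 0" using g hp by (auto intro: add_nonneg_pos)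
        then show ?thesis using that g by (simp add: divide_simps; simp add: algebra_simps power2_eq_square)
      qed
      show "1 / g * (sqrt t / ((t + p) * (t + g))) = hh t * k0 t"
        unfolding hh_def k0_def z0 using *[of "sqrt t"] t by simp
    qed
    then have I0v: "I0 = 1 / g * (pi / (sqrt p + sqrt g))" using HI0 by (rule has_integral_unique[symmetric])
    have "(hh has_integral pi / sqrt p) {0<..}" unfolding hh_def z0 using E1[OF hp] by simp
    then have RCv: "2 * R_C z p = pi / sqrt p" using H1 by (rule has_integral_unique[symmetric])
    have "R_J x y 0 p = 3 / 2 * (1 / g * (pi / sqrt p) - \<theta> * (1 / g * (pi / (sqrt p + sqrt g))))"
      using RJ2 z0 unfolding RCv I0v by simp
    also have "\<dots> = 3 * pi / (2 * sqrt (x * y * p)) * (1 - \<theta> * sqrt p / (sqrt g + sqrt p))"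
    proof -
      have sx: "sqrt (x * y * p) = g * sqrt p" unfolding g_def by (simp add: real_sqrt_mult)
      have "sqrt p > 0" "sqrt g > 0" using hp g by auto
      then show ?thesis unfolding sx using g by (simp add: divide_simps; simp add: algebra_simps)
    qed
    finally show ?thesis .
  qed
  show ?thesis using th1 th2 A B C by blast
qed


lemma part2:
  fixes x y z p :: real
  assumes hx: "x > 0" and hy: "y > 0" and hz: "z \<ge> 0" and hp: "p > 0"
  defines "g \<equiv> sqrt (x * y)" and "a \<equiv> (x + y) / 2"
      and "b \<equiv> sqrt (3 * p * (p + 2 * z)) / 2"
      and "d \<equiv> (z + 2 * p) / 3"
  shows "\<exists>\<theta>'. sqrt b / (1 + sqrt (b / g)) < \<theta>'
            \<and> \<theta>' < 3 * a / (2 * g) * (sqrt d / (1 + sqrt (d / g)))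
            \<and> R_J x y z p = 3 / g * R_C z p - 6 / (x * y) * R_G x y 0
                 + 3 * pi * \<theta>' / (2 * x * y)"
proof -
  have g: "g > 0" unfolding g_def using hx hy by simp
  have gg: "g * g = x * y" unfolding g_def using hx hy by simp
  have b0: "b > 0" unfolding b_def using hp hz by simp
  have d0: "d > 0" unfolding d_def using hp hz by simp
  have ag: "a \<ge> 0" unfolding a_def using hx hy by simp
  define hh where "hh = (\<lambda>t::real. 1 / (sqrt (t + z) * (t + p)))"
  define kk where "kk = (\<lambda>t::real. 1 / g - 1 / sqrt ((t + x) * (t + y)))"
  define k0 where "k0 = (\<lambda>t::real. t / (g * (t + g)))"
  note kb = kk_bounds[OF hx hy, folded g_def a_def, folded kk_def k0_def]
  have kb1: "k0 t \<le> kk t" "kk t \<le> a / g * k0 t" "0 \<le> k0 t" "kk t \<le> 1 / g" "k0 t \<le> 1 / g"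
    if "t > 0" for t using kb[OF that] unfolding kk_def k0_def by auto
  have hpos: "hh t > 0" if "t > 0" for t unfolding hh_def using that hz hp by (simp add: add_pos_nonneg)
  have c_hh: "continuous_on {0<..} hh" unfolding hh_def by (rule hh_cont[OF hz hp])
  have c_kk: "continuous_on {0<..} kk" unfolding kk_def using hx hy
    by (intro continuous_intros) (auto simp: add_pos_pos)
  have c_k0: "continuous_on {0<..} k0" unfolding k0_def using g
    by (intro continuous_intros) (auto simp: add_pos_pos)
  have H1: "(hh has_integral 2 * R_C z p) {0<..}" unfolding hh_def by (rule RC_has[OF hz hp])
  have H1s: "((\<lambda>t. 1 / g * hh t) has_integral 1 / g * (2 * R_C z p)) {0<..}"
    by (rule has_integral_mult_right[OF H1])
  have int_hk0: "(\<lambda>t. hh t * k0 t) integrable_on {0<..}"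
  proof (rule int_dom)
    show "continuous_on {0<..} (\<lambda>t. hh t * k0 t)" using c_hh c_k0 by (intro continuous_intros)
    show "(\<lambda>t. 1 / g * hh t) integrable_on {0<..}" using H1s by blast
    fix t :: real assume t: "0 < t"
    have "hh t * k0 t \<le> hh t * (1 / g)" using kb1(5)[OF t] hpos[OF t] by (intro mult_left_mono) auto
    moreover have "0 \<le> hh t * k0 t" using kb1(3)[OF t] hpos[OF t] by simp
    ultimately show "\<bar>hh t * k0 t\<bar> \<le> 1 / g * hh t" by simp
  qed
  have sQ: "sqrt ((t + x) * (t + y)) \<ge> t + g" if "t > 0" for t
    using P1(1)[OF hx hy less_imp_le[OF that]] that unfolding g_def by linarith
  have int_hQ: "(\<lambda>t. hh t / sqrt ((t + x) * (t + y))) integrable_on {0<..}"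
  proof (rule int_dom)
    show "continuous_on {0<..} (\<lambda>t. hh t / sqrt ((t + x) * (t + y)))" using c_hh hx hy
      by (intro continuous_intros) auto
    show "(\<lambda>t. 1 / g * hh t) integrable_on {0<..}" using H1s by blast
    fix t :: real assume t: "0 < t"
    have "hh t / sqrt ((t + x) * (t + y)) \<le> hh t / g"
      using sQ[OF t] hpos[OF t] g t by (intro divide_left_mono) (auto intro: mult_pos_pos less_le_trans)
    then show "\<bar>hh t / sqrt ((t + x) * (t + y))\<bar> \<le> 1 / g * hh t"
      using hpos[OF t] hx hy t by simp
  qed
  define J where "J = integral {0<..} (\<lambda>t. hh t / sqrt ((t + x) * (t + y)))"
  have HJ: "((\<lambda>t. hh t / sqrt ((t + x) * (t + y))) has_integral J) {0<..}"
    unfolding J_def using int_hQ by (rule integrable_integral)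
  have RJ: "R_J x y z p = 3 / 2 * J"
  proof -
    have "integral {0<..} (\<lambda>t. 1 / (sqrt ((t + x) * (t + y) * (t + z)) * (t + p))) = J"
      unfolding J_def
    proof (rule int_cong0)
      fix t :: real assume t: "t > 0"
      show "1 / (sqrt ((t + x) * (t + y) * (t + z)) * (t + p)) = hh t / sqrt ((t + x) * (t + y))"
        unfolding hh_def by (simp add: real_sqrt_mult)
    qed
    then show ?thesis unfolding R_J_def int_Ici by simp
  qed
  define I where "I = 1 / g * (2 * R_C z p) - J"
  have HI: "((\<lambda>t. hh t * kk t) has_integral I) {0<..}"
    unfolding I_def
  proof (rule has_int_cong0[OF has_integral_diff[OF H1s HJ]])
    fix t :: real assume "t > 0"
    show "1 / g * hh t - hh t / sqrt ((t + x) * (t + y)) = hh t * kk t"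
      unfolding kk_def by (simp add: algebra_simps)
  qed
  define I0 where "I0 = integral {0<..} (\<lambda>t. hh t * k0 t)"
  have HI0: "((\<lambda>t. hh t * k0 t) has_integral I0) {0<..}"
    unfolding I0_def using int_hk0 by (rule integrable_integral)
  define T3 where "T3 = (\<lambda>t::real. kk t / (t * sqrt t))"
  define D0 where "D0 = (\<lambda>t::real. a / g * (1 / g * (1 / (sqrt t * (t + g)))))"
  have HD0: "(D0 has_integral a / g * (1 / g * (pi / sqrt g))) {0<..}"
    unfolding D0_def by (intro has_integral_mult_right E1 g)
  have T3b: "0 \<le> T3 t" "T3 t \<le> D0 t" if t: "t > 0" for t
  proof -
    show "0 \<le> T3 t" unfolding T3_def using kb1(1,3)[OF t] t by simp
    have "T3 t \<le> a / g * k0 t / (t * sqrt t)" unfolding T3_def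
      using kb1(2)[OF t] t by (intro divide_right_mono) auto
    also have "\<dots> = D0 t" unfolding D0_def k0_def using H_a[OF t g] by (simp add: mult.assoc)
    finally show "T3 t \<le> D0 t" .
  qed
  have c_T3: "continuous_on {0<..} T3" unfolding T3_def using c_kk
    by (intro continuous_intros) auto
  have int_T3: "T3 integrable_on {0<..}"
    by (rule int_dom[OF c_T3]) (use HD0 T3b in auto)
  define IT3 where "IT3 = integral {0<..} T3"
  have HT3: "(T3 has_integral IT3) {0<..}" unfolding IT3_def using int_T3 by (rule integrable_integral)
  define AA where "AA = (\<lambda>t::real. (x / (t + x) + y / (t + y)) * sqrt t / sqrt ((t + x) * (t + y)))"
  have RG1: "R_G x y 0 = 1 / 4 * integral {0<..} AA"
  proof -
    have "integral {0<..} (\<lambda>t. (x / (t + x) + y / (t + y) + 0 / (t + 0)) * t / sqrt ((t + x) * (t + y) * (t + 0))) = integral {0<..} AA"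
    proof (rule int_cong0)
      fix t :: real assume t: "t > 0"
      have e: "C * t / sqrt (q * t) = C * sqrt t / sqrt q" if "q > 0" for C q
        using t that by (simp add: real_sqrt_mult divide_simps)
      have "(x / (t + x) + y / (t + y)) * t / sqrt ((t + x) * (t + y) * t) = AA t"
        unfolding AA_def by (rule e) (use t hx hy in simp)
      then show "(x / (t + x) + y / (t + y) + 0 / (t + 0)) * t / sqrt ((t + x) * (t + y) * (t + 0)) = AA t"
        by simp
    qed
    then show ?thesis unfolding R_G_def int_Ici by simp
  qed
  have AApos: "AA t \<ge> 0" if "t > 0" for t unfolding AA_def using that hx hy by simp
  have c_AA: "continuous_on {0<..} AA" unfolding AA_def using hx hy
    by (intro continuous_intros) auto
  have int_AA: "AA integrable_on {0<..}"
  proof (rule int_dom[OF c_AA])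
    have "((\<lambda>t. x * (sqrt t / ((t + x) * (t + g))) + y * (sqrt t / ((t + y) * (t + g)))) has_integral
        x * (pi / (sqrt x + sqrt g)) + y * (pi / (sqrt y + sqrt g))) {0<..}"
      by (intro has_integral_add has_integral_mult_right E2 hx hy g)
    then show "(\<lambda>t. x * (sqrt t / ((t + x) * (t + g))) + y * (sqrt t / ((t + y) * (t + g)))) integrable_on {0<..}"
      by blast
    fix t :: real assume t: "0 < t"
    have q: "sqrt t / sqrt ((t + x) * (t + y)) \<le> sqrt t / (t + g)"
      using sQ[OF t] t g hx hy by (intro divide_left_mono) (auto intro!: mult_pos_pos)
    have "AA t = x / (t + x) * (sqrt t / sqrt ((t + x) * (t + y))) + y / (t + y) * (sqrt t / sqrt ((t + x) * (t + y)))"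
      unfolding AA_def by (simp only: distrib_right add_divide_distrib times_divide_eq_right)
    also have "\<dots> \<le> x / (t + x) * (sqrt t / (t + g)) + y / (t + y) * (sqrt t / (t + g))"
      using q hx hy t by (intro add_mono mult_left_mono) auto
    also have "\<dots> = x * (sqrt t / ((t + x) * (t + g))) + y * (sqrt t / ((t + y) * (t + g)))"
      by simp
    finally show "\<bar>AA t\<bar> \<le> x * (sqrt t / ((t + x) * (t + g))) + y * (sqrt t / ((t + y) * (t + g)))"
      using AApos[OF t] by simp
  qed
  define ff where "ff = (\<lambda>t. AA t - x * y * T3 t + x * y * D0 t)"
  define FF where "FF = (\<lambda>t. 2 * x * y * ((1 / g - 1 / sqrt ((t + x) * (t + y))) * (1 / sqrt t)) - 2 * (x + y) * (sqrt t * (1 / sqrt ((t + x) * (t + y))))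
      + x * y * (a / g * (1 / g * (2 / sqrt g * arctan (sqrt t / sqrt g)))))"
  have Hff: "(ff has_integral (x * y * (a / g * (1 / g * (pi / sqrt g))) - 0)) {0<..}"
  proof (rule FTC_Ioi[where F = FF])
    fix t :: real assume t: "0 < t"
    show "DERIV FF t :> ff t"
      unfolding FF_def ff_def AA_def T3_def kk_def D0_def
      by (rule DERIV_add[OF d_RG[OF hx hy t g] DERIV_cmult[OF DERIV_cmult[OF DERIV_cmult[OF dE1[OF g t]]]]])
    have c_D0: "continuous_on {0<..} D0" unfolding D0_def using g by (intro continuous_intros) auto
    have "continuous_on {0<..} ff" unfolding ff_def using c_AA c_T3 c_D0 by (intro continuous_intros)
    then show "isCont ff t" using t by (simp add: continuous_on_eq_continuous_at)
    have "x * y * T3 t \<le> x * y * D0 t" using T3b(2)[OF t] hx hy by (intro mult_left_mono) auto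
    then show "0 \<le> ff t" unfolding ff_def using AApos[OF t] by linarith
  next
    have lA0: "((\<lambda>t. 2 * x * y * ((1 / g - 1 / sqrt ((t + x) * (t + y))) * (1 / sqrt t))) \<longlongrightarrow> 0) (at_right 0)"
    proof -
      have "((\<lambda>t. 2 * x * y * (sqrt t * (t + x + y) / (g * sqrt ((t + x) * (t + y)) * (sqrt ((t + x) * (t + y)) + g)))) \<longlongrightarrow>
          2 * x * y * (sqrt 0 * (0 + x + y) / (g * sqrt ((0 + x) * (0 + y)) * (sqrt ((0 + x) * (0 + y)) + g)))) (at_right 0)"
        by (intro tendsto_intros) (use g hx hy in \<open>auto simp: add_pos_pos g_def[symmetric]\<close>)
      then have "((\<lambda>t. 2 * x * y * (sqrt t * (t + x + y) / (g * sqrt ((t + x) * (t + y)) * (sqrt ((t + x) * (t + y)) + g)))) \<longlongrightarrow> 0) (at_right 0)"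
        by simp
      moreover have "eventually (\<lambda>t. 2 * x * y * (sqrt t * (t + x + y) / (g * sqrt ((t + x) * (t + y)) * (sqrt ((t + x) * (t + y)) + g)))
          = 2 * x * y * ((1 / g - 1 / sqrt ((t + x) * (t + y))) * (1 / sqrt t))) (at_right 0)"
      proof (rule eventually_at_rightI[of 0 1])
        fix t :: real assume t: "t \<in> {0<..<1}"
        then have t0: "t > 0" by simp
        have "(1 / g - 1 / sqrt ((t + x) * (t + y))) * (1 / sqrt t) = sqrt t * (t + x + y) / (g * sqrt ((t + x) * (t + y)) * (sqrt ((t + x) * (t + y)) + g))"
        proof (rule H_lim)
          show "sqrt ((t + x) * (t + y)) > 0" using t0 hx hy by simp
          show "sqrt t > 0" using t0 by simp
          show "g > 0" by (rule g)
          show "sqrt ((t + x) * (t + y)) * sqrt ((t + x) * (t + y)) = t * t + (x + y) * t + g * g"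
            using t0 hx hy gg by (simp add: algebra_simps)
          show "sqrt t * sqrt t = t" using t0 by simp
        qed
        then show "2 * x * y * (sqrt t * (t + x + y) / (g * sqrt ((t + x) * (t + y)) * (sqrt ((t + x) * (t + y)) + g)))
          = 2 * x * y * ((1 / g - 1 / sqrt ((t + x) * (t + y))) * (1 / sqrt t))" by simp
      qed simp
      ultimately show ?thesis by (rule Lim_transform_eventually)
    qed
    have lB0: "((\<lambda>t. 2 * (x + y) * (sqrt t * (1 / sqrt ((t + x) * (t + y))))) \<longlongrightarrow> 0) (at_right 0)"
      using hx hy by real_asymp
    have lC0: "((\<lambda>t. x * y * (a / g * (1 / g * (2 / sqrt g * arctan (sqrt t / sqrt g))))) \<longlongrightarrow> x * y * (a / g * (1 / g * 0))) (at_right 0)"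
      by (intro tendsto_mult_left limE1_0 g)
    show "(FF \<longlongrightarrow> 0) (at_right 0)" unfolding FF_def
      using tendsto_add[OF tendsto_diff[OF lA0 lB0] lC0] by simp
    have lAi: "((\<lambda>t. 2 * x * y * ((1 / g - 1 / sqrt ((t + x) * (t + y))) * (1 / sqrt t))) \<longlongrightarrow> 0) at_top"
      using g hx hy by real_asymp
    have lBi: "((\<lambda>t. 2 * (x + y) * (sqrt t * (1 / sqrt ((t + x) * (t + y))))) \<longlongrightarrow> 0) at_top"
      using hx hy by real_asymp
    have lCi: "((\<lambda>t. x * y * (a / g * (1 / g * (2 / sqrt g * arctan (sqrt t / sqrt g))))) \<longlongrightarrow> x * y * (a / g * (1 / g * (pi / sqrt g)))) at_top"
      by (intro tendsto_mult_left limE1_top g)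
    show "(FF \<longlongrightarrow> x * y * (a / g * (1 / g * (pi / sqrt g)))) at_top" unfolding FF_def
      using tendsto_add[OF tendsto_diff[OF lAi lBi] lCi] by simp
  qed
  have HAA: "(AA has_integral x * y * IT3) {0<..}"
  proof -
    have "((\<lambda>t. ff t + x * y * T3 t - x * y * D0 t) has_integral
       (x * y * (a / g * (1 / g * (pi / sqrt g))) - 0) + x * y * IT3 - x * y * (a / g * (1 / g * (pi / sqrt g)))) {0<..}"
      by (intro has_integral_diff has_integral_add Hff has_integral_mult_right HT3 HD0)
    then show ?thesis by (rule has_int_cong0[where v = "_", THEN has_integral_eq_rhs]) (auto simp: ff_def)
  qed
  have RG: "R_G x y 0 = x * y / 4 * IT3" unfolding RG1 using integral_unique[OF HAA] by simp
  define \<theta>' where "\<theta>' = x * y / pi * (IT3 - I)"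
  have ident: "R_J x y z p = 3 / g * R_C z p - 6 / (x * y) * R_G x y 0 + 3 * pi * \<theta>' / (2 * x * y)"
  proof -
    have Jv: "J = 1 / g * (2 * R_C z p) - I" unfolding I_def by simp
    show ?thesis unfolding RJ RG \<theta>'_def Jv using hx hy pi_gt_zero g by (simp add: field_simps)
  qed
  define mm where "mm = (\<lambda>t::real. 1 / (t * sqrt t) - hh t)"
  have mm0: "mm t \<ge> 0" if t: "t > 0" for t
  proof -
    have "sqrt t * t \<le> sqrt (t + z) * (t + p)" using t hz hp by (intro mult_mono) auto
    moreover have "0 < sqrt (t + z) * (t + p) * (sqrt t * t)" using t hz hp by (intro mult_pos_pos) auto
    ultimately have "hh t \<le> 1 / (sqrt t * t)" unfolding hh_def
      by (intro divide_left_mono) auto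
    then show ?thesis unfolding mm_def by (simp add: mult.commute)
  qed
  have Hmk: "((\<lambda>t. mm t * kk t) has_integral IT3 - I) {0<..}"
  proof (rule has_int_cong0[OF has_integral_diff[OF HT3 HI]])
    fix t :: real assume t: "t > 0"
    show "T3 t - hh t * kk t = mm t * kk t" unfolding T3_def mm_def by (simp add: algebra_simps)
  qed
  have Hmk0: "((\<lambda>t. mm t * k0 t) has_integral 1 / g * (pi / sqrt g) - I0) {0<..}"
  proof (rule has_int_cong0[OF has_integral_diff[OF has_integral_mult_right[OF E1[OF g]] HI0]])
    fix t :: real assume t: "t > 0"
    have "k0 t / (t * sqrt t) = 1 / g * (1 / (sqrt t * (t + g)))" unfolding k0_def by (rule H_a[OF t g])
    then show "1 / g * (1 / (sqrt t * (t + g))) - hh t * k0 t = mm t * k0 t"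
      unfolding mm_def by (simp add: algebra_simps)
  qed
  have mk0_form: "mm t * k0 t = 1 / (g * (t + g)) * (1 / sqrt t - t * hh t)" if t: "t > 0" for t
  proof -
    have "mm t * k0 t = 1 / g * (1 / (sqrt t * (t + g))) - hh t * k0 t"
    proof -
      have "k0 t / (t * sqrt t) = 1 / g * (1 / (sqrt t * (t + g)))" unfolding k0_def by (rule H_a[OF t g])
      then show ?thesis unfolding mm_def by (simp add: algebra_simps)
    qed
    also have "\<dots> = 1 / (g * (t + g)) * (1 / sqrt t - t * hh t)" unfolding k0_def by (rule H_b[OF t g])
    finally show ?thesis .
  qed
  have c_mm: "continuous_on {0<..} mm" unfolding mm_def using c_hh by (intro continuous_intros) auto
  have int_mk0: "(\<lambda>t. mm t * k0 t) integrable_on {0<..}" using Hmk0 by blast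
  have c_mk0: "continuous_on {0<..} (\<lambda>t. mm t * k0 t)" using c_mm c_k0 by (intro continuous_intros)
  have low1: "1 / g * (pi / sqrt g) - I0 \<le> IT3 - I"
  proof (rule has_integral_le[OF Hmk0 Hmk])
    fix t :: real assume "t \<in> {0<..}"
    then have t: "t > 0" by simp
    show "mm t * k0 t \<le> mm t * kk t" using mult_left_mono[OF kb1(1)[OF t] mm0[OF t]] .
  qed
  have HL: "((\<lambda>t. 1 / g * (1 / (sqrt t * (t + g)) - sqrt t / ((t + b) * (t + g)))) has_integral 1 / g * (pi / sqrt g - pi / (sqrt b + sqrt g))) {0<..}"
    by (intro has_integral_mult_right has_integral_diff E1 E2 g b0)
  have low2: "1 / g * (pi / sqrt g - pi / (sqrt b + sqrt g)) < 1 / g * (pi / sqrt g) - I0"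
  proof -
    have "integral {0<..} (\<lambda>t. 1 / g * (1 / (sqrt t * (t + g)) - sqrt t / ((t + b) * (t + g)))) < integral {0<..} (\<lambda>t. mm t * k0 t)"
    proof (rule int_strict)
      show "(\<lambda>t. 1 / g * (1 / (sqrt t * (t + g)) - sqrt t / ((t + b) * (t + g)))) integrable_on {0<..}" using HL by blast
      show "(\<lambda>t. mm t * k0 t) integrable_on {0<..}" by (rule int_mk0)
      show "continuous_on {0<..} (\<lambda>t. 1 / g * (1 / (sqrt t * (t + g)) - sqrt t / ((t + b) * (t + g))))"
        using g b0 by (intro continuous_intros) auto
      show "continuous_on {0<..} (\<lambda>t. mm t * k0 t)" by (rule c_mk0)
      fix t :: real assume t: "0 < t"
      have P: "t * hh t < sqrt t / (t + b)" unfolding hh_def by (rule P4[OF t hz hp b_def[THEN meta_eq_to_obj_eq]])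
      have "1 / (g * (t + g)) * (1 / sqrt t - sqrt t / (t + b)) < 1 / (g * (t + g)) * (1 / sqrt t - t * hh t)"
        using P g t by (intro mult_strict_left_mono) auto
      then show "1 / g * (1 / (sqrt t * (t + g)) - sqrt t / ((t + b) * (t + g))) < mm t * k0 t"
        unfolding H_c[OF t g less_imp_le[OF b0]] mk0_form[OF t] .
    qed
    then show ?thesis unfolding integral_unique[OF HL] integral_unique[OF Hmk0] .
  qed
  have HaM: "((\<lambda>t. a / g * (mm t * k0 t)) has_integral a / g * (1 / g * (pi / sqrt g) - I0)) {0<..}"
    by (rule has_integral_mult_right[OF Hmk0])
  have up1: "IT3 - I \<le> a / g * (1 / g * (pi / sqrt g) - I0)"
  proof (rule has_integral_le[OF Hmk HaM])
    fix t :: real assume "t \<in> {0<..}"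
    then have t: "t > 0" by simp
    have "mm t * kk t \<le> mm t * (a / g * k0 t)" using mult_left_mono[OF kb1(2)[OF t] mm0[OF t]] .
    then show "mm t * kk t \<le> a / g * (mm t * k0 t)" by (simp add: algebra_simps)
  qed
  have HU: "((\<lambda>t. 3 / (2 * g) * (1 / (sqrt t * (t + g)) - sqrt t / ((t + d) * (t + g)))) has_integral 3 / (2 * g) * (pi / sqrt g - pi / (sqrt d + sqrt g))) {0<..}"
    by (intro has_integral_mult_right has_integral_diff E1 E2 g d0)
  have up2: "1 / g * (pi / sqrt g) - I0 < 3 / (2 * g) * (pi / sqrt g - pi / (sqrt d + sqrt g))"
  proof -
    have "integral {0<..} (\<lambda>t. mm t * k0 t) < integral {0<..} (\<lambda>t. 3 / (2 * g) * (1 / (sqrt t * (t + g)) - sqrt t / ((t + d) * (t + g))))"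
    proof (rule int_strict)
      show "(\<lambda>t. 3 / (2 * g) * (1 / (sqrt t * (t + g)) - sqrt t / ((t + d) * (t + g)))) integrable_on {0<..}" using HU by blast
      show "(\<lambda>t. mm t * k0 t) integrable_on {0<..}" by (rule int_mk0)
      show "continuous_on {0<..} (\<lambda>t. 3 / (2 * g) * (1 / (sqrt t * (t + g)) - sqrt t / ((t + d) * (t + g))))"
        using g d0 by (intro continuous_intros) auto
      show "continuous_on {0<..} (\<lambda>t. mm t * k0 t)" by (rule c_mk0)
      fix t :: real assume t: "0 < t"
      have P: "1 / sqrt t - t * hh t < 3 / 2 * (1 / sqrt t - sqrt t / (t + d))" unfolding hh_def by (rule P5[OF t hz hp d_def[THEN meta_eq_to_obj_eq]])
      have "1 / (g * (t + g)) * (1 / sqrt t - t * hh t) < 1 / (g * (t + g)) * (3 / 2 * (1 / sqrt t - sqrt t / (t + d)))"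
        using P g t by (intro mult_strict_left_mono) auto
      then show "mm t * k0 t < 3 / (2 * g) * (1 / (sqrt t * (t + g)) - sqrt t / ((t + d) * (t + g)))"
        unfolding H_d[OF t g less_imp_le[OF d0]] mk0_form[OF t] .
    qed
    then show ?thesis unfolding integral_unique[OF HU] integral_unique[OF Hmk0] .
  qed
  have xyp: "x * y / pi > 0" using hx hy pi_gt_zero by simp
  have apos: "a / g > 0" unfolding a_def using hx hy g by simp
  have lo: "sqrt b / (1 + sqrt (b / g)) < \<theta>'"
  proof -
    have "x * y / pi * (1 / g * (pi / sqrt g - pi / (sqrt b + sqrt g))) < x * y / pi * (IT3 - I)"
      using low1 low2 xyp by (intro mult_strict_left_mono) auto
    then show ?thesis unfolding \<theta>'_def gg[symmetric] fin_lo[OF g b0] .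
  qed
  have hi: "\<theta>' < 3 * a / (2 * g) * (sqrt d / (1 + sqrt (d / g)))"
  proof -
    have "a / g * (1 / g * (pi / sqrt g) - I0) < a / g * (3 / (2 * g) * (pi / sqrt g - pi / (sqrt d + sqrt g)))"
      using up2 apos by (intro mult_strict_left_mono) auto
    then have "IT3 - I < a / g * (3 / (2 * g) * (pi / sqrt g - pi / (sqrt d + sqrt g)))" using up1 by linarith
    then have "x * y / pi * (IT3 - I) < x * y / pi * (a / g * (3 / (2 * g) * (pi / sqrt g - pi / (sqrt d + sqrt g))))"
      using xyp by (intro mult_strict_left_mono) auto
    then show ?thesis unfolding \<theta>'_def gg[symmetric] fin_hi[OF g d0] .
  qed
  show ?thesis using lo hi ident by blast
qed


theorem mainTheorem13:
  fixes x y z p :: real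
  assumes hx: "x > 0" and hy: "y > 0" and hz: "z \<ge> 0" and hp: "p > 0"
  defines "a \<equiv> (x + y) / 2"
      and "g \<equiv> sqrt (x * y)"
      and "b \<equiv> sqrt (3 * p * (p + 2 * z)) / 2"
      and "d \<equiv> (z + 2 * p) / 3"
  shows "(\<exists>\<theta>. 1 \<le> \<theta> \<and> \<theta> \<le> a / g
            \<and> (\<theta> = 1 \<longleftrightarrow> x = y) \<and> (\<theta> = a / g \<longleftrightarrow> x = y)
            \<and> (g \<noteq> p \<longrightarrow>
                 R_J x y z p = 3 / g * R_C z p
                   - 3 * \<theta> / (g - p) * (R_C z g - p / g * R_C z p))
            \<and> (z = 0 \<longrightarrow>
                 R_J x y 0 p = 3 * pi / (2 * sqrt (x * y * p))
                   * (1 - \<theta> * sqrt p / (sqrt g + sqrt p))))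
       \<and> (\<exists>\<theta>'. sqrt b / (1 + sqrt (b / g)) < \<theta>'
            \<and> \<theta>' < 3 * a / (2 * g) * (sqrt d / (1 + sqrt (d / g)))
            \<and> R_J x y z p = 3 / g * R_C z p - 6 / (x * y) * R_G x y 0
                 + 3 * pi * \<theta>' / (2 * x * y))"
  using part1[OF hx hy hz hp] part2[OF hx hy hz hp]
  unfolding a_def g_def b_def d_def by blast

end
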